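(* (a) The minimal Lagrangian fibres of a cohomogeneity-1 toric Kähler metric on $\mathbb{CP}^2$ sit above the diagonal $\triangle=\{x_1=x_2\}$ in the standard simplex $P$. (b) A cohomogeneity-1 toric Kähler metric on $\mathbb{CP}^2$ which is analytic admits a finite set of minimal Lagrangian fibres. (c) There is a (non-analytic) cohomogeneity-1 toric Kähler metric on $\mathbb{CP}^2$ which admits a continuum of minimal Lagrangian fibres. (d) Given a finite subset $\{p_1,\dots,p_k\}\subset \mathrm{int}\, P\cap \triangle$, there is a cohomogeneity-1 toric Kähler metric on $\mathbb{CP}^2$ whose set of minimal Lagrangian fibres is precisely (the set of fibres over) $\{p_1,\dots,p_k\}$.
   Context: $\mathbb{CP}^2$ is regarded as a toric manifold with moment map $\mu$ whose moment polytope is the standard simplex $P=\{x\in\mathbb{R}^2: l_i(x)\ge 0\}$, with $l_1(x)=x_1$, $l_2(x)=x_2$, $l_3(x)=1-x_1-x_2$. Toric Kähler metrics are described in action-angle coordinates $(x,\theta)$ by a symplectic potential $u$ on $P$, with $g=u_{ij}\,dx^i dx^j+u^{ij}\,d\theta^i d\theta^j$, where $u_{ij}=\partial^2 u/\partial x^i\partial x^j$ and $(u^{ij})$ is its inverse; $u-u_G$ is smooth on a neighbourhood of $P$, where $u_G=\tfrac12\sum_i(l_i\log l_i-l_i)$ is the Guillemin potential. A cohomogeneity-1 toric Kähler metric on $\mathbb{CP}^2$ is one whose symplectic potential has the form $u(x)=u_G(x)+\tfrac12 f(x_1+x_2)$ for a function $f$ of one variable (positivity of the Hessian amounts to $f''(t)>-\frac{1}{t(t-1)}$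 for $0<t<1$). A fibre $\mu^{-1}(x)$, $x\in\mathrm{int}\,P$, is a minimal Lagrangian torus if and only if $x$ is a critical point of the orbital volume function $V=(\det \mathrm{Hess}(u))^{-1/2}$ (equivalently of $\log\det\mathrm{Hess}(u)$); "minimal Lagrangian fibres" refers to such fibres. *)

theory Defs
  imports "HOL-Analysis.Analysis"
begin

definition intP :: "(real \<times> real) set" where
  "intP = {x. 0 < fst x \<and> 0 < snd x \<and> fst x + snd x < 1}"

text \<open>Guillemin potential u_G = 1/2 sum_i (l_i log l_i - l_i).\<close>
definition uG :: "real \<times> real \<Rightarrow> real" where
  "uG x = (let l1 = fst x; l2 = snd x; l3 = 1 - fst x - snd x in
     (l1 * ln l1 - l1 + l2 * ln l2 - l2 + l3 * ln l3 - l3) / 2)"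

definition sympot :: "(real \<Rightarrow> real) \<Rightarrow> real \<times> real \<Rightarrow> real" where
  "sympot f x = uG x + f (fst x + snd x) / 2"

definition pd1 :: "(real \<times> real \<Rightarrow> real) \<Rightarrow> real \<times> real \<Rightarrow> real" where
  "pd1 g x = deriv (\<lambda>s. g (s, snd x)) (fst x)"

definition pd2 :: "(real \<times> real \<Rightarrow> real) \<Rightarrow> real \<times> real \<Rightarrow> real" where
  "pd2 g x = deriv (\<lambda>s. g (fst x, s)) (snd x)"

definition hess :: "(real \<times> real \<Rightarrow> real) \<Rightarrow> real \<times> real \<Rightarrow> nat \<Rightarrow> nat \<Rightarrow> real" where
  "hess u x i j = (let pd = (\<lambda>k. if k = 1 then pd1 else pd2) in pd j (pd i u) x)"

definition hess_det :: "(real \<times> real \<Rightarrow> real) \<Rightarrow> real \<times> real \<Rightarrow> real" where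
  "hess_det u x = hess u x 1 1 * hess u x 2 2 - hess u x 1 2 * hess u x 2 1"

definition hess_posdef :: "(real \<times> real \<Rightarrow> real) \<Rightarrow> real \<times> real \<Rightarrow> bool" where
  "hess_posdef u x \<longleftrightarrow> (\<forall>v1 v2::real. (v1, v2) \<noteq> (0, 0) \<longrightarrow>
      v1 * (hess u x 1 1 * v1 + hess u x 1 2 * v2)
    + v2 * (hess u x 2 1 * v1 + hess u x 2 2 * v2) > 0)"

definition orbital_volume :: "(real \<times> real \<Rightarrow> real) \<Rightarrow> real \<times> real \<Rightarrow> real" where
  "orbital_volume u x = hess_det u x powr (-1/2)"

definition smooth_on :: "real set \<Rightarrow> (real \<Rightarrow> real) \<Rightarrow> bool" where
  "smooth_on U f \<longleftrightarrow> (\<forall>n. \<forall>t\<in>U. ((deriv ^^ n) f) differentiable (at t))"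

definition real_analytic_on :: "real set \<Rightarrow> (real \<Rightarrow> real) \<Rightarrow> bool" where
  "real_analytic_on U f \<longleftrightarrow> (\<forall>t0\<in>U. \<exists>r>0. \<exists>a::nat \<Rightarrow> real.
      \<forall>t. \<bar>t - t0\<bar> < r \<longrightarrow> (\<lambda>n. a n * (t - t0) ^ n) sums f t)"

text \<open>f defines a cohomogeneity-1 toric Kaehler metric on CP^2: u - u_G = f(x1+x2)/2 smooth
  on a neighbourhood of P (i.e. f smooth near [0,1]) and Hess(u) positive definite on int P.\<close>
definition coh1_metric :: "(real \<Rightarrow> real) \<Rightarrow> bool" where
  "coh1_metric f \<longleftrightarrow> (\<exists>U. open U \<and> {0..1} \<subseteq> U \<and> smooth_on U f)
     \<and> (\<forall>x\<in>intP. hess_posdef (sympot f) x)"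

definition analytic_metric :: "(real \<Rightarrow> real) \<Rightarrow> bool" where
  "analytic_metric f \<longleftrightarrow> (\<exists>U. open U \<and> {0..1} \<subseteq> U \<and> real_analytic_on U f)"

text \<open>The fibre over x is a minimal Lagrangian torus: x interior critical point of V.\<close>
definition minimal_fibre :: "(real \<Rightarrow> real) \<Rightarrow> real \<times> real \<Rightarrow> bool" where
  "minimal_fibre f x \<longleftrightarrow> x \<in> intP \<and> (orbital_volume (sympot f) has_derivative (\<lambda>_. 0)) (at x)"

end

theory Submission
  imports Defs "HOL-Complex_Analysis.Complex_Analysis" "HOL-Computational_Algebra.Polynomial"
begin

definition D3 :: "(real \<Rightarrow> real) \<Rightarrow> bool" where
 "D3 f \<longleftrightarrow> (\<forall>t\<in>{0<..<1}. (f has_real_derivative deriv f t) (at t) \<and>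
     (deriv f has_real_derivative deriv (deriv f) t) (at t) \<and>
     (deriv (deriv f) has_real_derivative deriv (deriv (deriv f)) t) (at t))"

lemma intP_iff: "x \<in> intP \<longleftrightarrow> 0 < fst x \<and> 0 < snd x \<and> fst x + snd x < 1"
  by (simp add: intP_def)

lemma DERIV_shiftR:
  assumes "(f has_real_derivative D) (at (x + c))"
  shows "((\<lambda>s. f (s + c)) has_real_derivative D) (at x)"
proof -
  have "((\<lambda>s. s + c) has_real_derivative 1) (at x)" by (auto intro!: derivative_eq_intros)
  from DERIV_chain2[OF assms this] show ?thesis by simp
qed

lemma DERIV_shiftL:
  assumes "(f has_real_derivative D) (at (c + x))"
  shows "((\<lambda>s. f (c + s)) has_real_derivative D) (at x)"
proof -
  have "((\<lambda>s. c + s) has_real_derivative 1) (at x)" by (auto intro!: derivative_eq_intros)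
  from DERIV_chain2[OF assms this] show ?thesis by simp
qed

lemma pd1_sympot:
  assumes "D3 f" "x \<in> intP"
  shows "pd1 (sympot f) x = (ln (fst x) - ln (1 - fst x - snd x) + deriv f (fst x + snd x)) / 2"
proof -
  obtain a b where x: "x = (a,b)" by force
  have p: "0 < a" "0 < b" "a + b < 1" using assms(2) by (auto simp: intP_iff x)
  have fd: "(f has_real_derivative deriv f (a+b)) (at (a+b))" using assms(1) p by (auto simp: D3_def)
  have fd': "((\<lambda>s. f (s + b)) has_real_derivative deriv f (a+b)) (at a)"
    using DERIV_shiftR[OF fd] .
  have "((\<lambda>s. sympot f (s, b)) has_real_derivative (ln a - ln (1 - a - b) + deriv f (a + b)) / 2) (at a)"
    unfolding sympot_def uG_def Let_def fst_conv snd_conv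
    using p
    apply (auto intro!: derivative_eq_intros fd')
    done
  then show ?thesis by (simp add: pd1_def x DERIV_imp_deriv)
qed

lemma pd2_sympot:
  assumes "D3 f" "x \<in> intP"
  shows "pd2 (sympot f) x = (ln (snd x) - ln (1 - fst x - snd x) + deriv f (fst x + snd x)) / 2"
proof -
  obtain a b where x: "x = (a,b)" by force
  have p: "0 < a" "0 < b" "a + b < 1" using assms(2) by (auto simp: intP_iff x)
  have fd: "(f has_real_derivative deriv f (a+b)) (at (a+b))" using assms(1) p by (auto simp: D3_def)
  have fd': "((\<lambda>s. f (a + s)) has_real_derivative deriv f (a+b)) (at b)"
    using DERIV_shiftL[OF fd] .
  have "((\<lambda>s. sympot f (a, s)) has_real_derivative (ln b - ln (1 - a - b) + deriv f (a + b)) / 2) (at b)"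
    unfolding sympot_def uG_def Let_def fst_conv snd_conv
    using p
    by (auto intro!: derivative_eq_intros fd')
  then show ?thesis by (simp add: pd2_def x DERIV_imp_deriv)
qed

definition gg :: "(real \<Rightarrow> real) \<Rightarrow> real \<Rightarrow> real" where
  "gg f t = 1 / (1 - t) + deriv (deriv f) t"

lemma hess_sympot:
  assumes "D3 f" "x \<in> intP"
  shows "hess (sympot f) x 1 1 = (1 / fst x + gg f (fst x + snd x)) / 2"
    "hess (sympot f) x 1 2 = gg f (fst x + snd x) / 2"
    "hess (sympot f) x 2 1 = gg f (fst x + snd x) / 2"
    "hess (sympot f) x 2 2 = (1 / snd x + gg f (fst x + snd x)) / 2"
proof -
  obtain a b where x: "x = (a,b)" by force
  have p: "0 < a" "0 < b" "a + b < 1" using assms(2) by (auto simp: intP_iff x)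
  have fd: "(deriv f has_real_derivative deriv (deriv f) (a+b)) (at (a+b))" using assms(1) p by (auto simp: D3_def)
  have fdR: "((\<lambda>s. deriv f (s + b)) has_real_derivative deriv (deriv f) (a+b)) (at a)"
    using DERIV_shiftR[OF fd] .
  have fdL: "((\<lambda>s. deriv f (a + s)) has_real_derivative deriv (deriv f) (a+b)) (at b)"
    using DERIV_shiftL[OF fd] .
  have ne: "1 - a - b \<noteq> 0" "1 - (a + b) \<noteq> 0" "a \<noteq> 0" "b \<noteq> 0" using p by auto
  have S1: "open {s. 0 < s \<and> s < 1 - b}" "a \<in> {s. 0 < s \<and> s < 1 - b}"
    using p by (auto simp: open_Collect_conj open_Collect_less intro!: continuous_intros)
  have S2: "open {s. 0 < s \<and> s < 1 - a}" "b \<in> {s. 0 < s \<and> s < 1 - a}"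
    using p by (auto simp: open_Collect_conj open_Collect_less intro!: continuous_intros)
  have "((\<lambda>s. (ln s - ln (1 - s - b) + deriv f (s + b)) / 2) has_real_derivative (1 / a + gg f (a + b)) / 2) (at a)"
    using p ne by (auto intro!: derivative_eq_intros fdR simp: gg_def)
  then have "((\<lambda>s. pd1 (sympot f) (s, b)) has_real_derivative (1 / a + gg f (a + b)) / 2) (at a)"
    by (rule has_field_derivative_transform_within_open[OF _ S1]) (use p in \<open>auto simp: pd1_sympot[OF assms(1)] intP_iff\<close>)
  then show "hess (sympot f) x 1 1 = (1 / fst x + gg f (fst x + snd x)) / 2"
    by (simp add: hess_def pd1_def x DERIV_imp_deriv)
  have "((\<lambda>s. (ln a - ln (1 - a - s) + deriv f (a + s)) / 2) has_real_derivative gg f (a + b) / 2) (at b)"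
    using p ne by (auto intro!: derivative_eq_intros fdL simp: gg_def)
  then have "((\<lambda>s. pd1 (sympot f) (a, s)) has_real_derivative gg f (a + b) / 2) (at b)"
    by (rule has_field_derivative_transform_within_open[OF _ S2]) (use p in \<open>auto simp: pd1_sympot[OF assms(1)] intP_iff\<close>)
  then show "hess (sympot f) x 1 2 = gg f (fst x + snd x) / 2"
    by (simp add: hess_def pd2_def x DERIV_imp_deriv)
  have "((\<lambda>s. (ln b - ln (1 - s - b) + deriv f (s + b)) / 2) has_real_derivative gg f (a + b) / 2) (at a)"
    using p ne by (auto intro!: derivative_eq_intros fdR simp: gg_def)
  then have "((\<lambda>s. pd2 (sympot f) (s, b)) has_real_derivative gg f (a + b) / 2) (at a)"
    by (rule has_field_derivative_transform_within_open[OF _ S1]) (use p in \<open>auto simp: pd2_sympot[OF assms(1)] intP_iff\<close>)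
  then show "hess (sympot f) x 2 1 = gg f (fst x + snd x) / 2"
    by (simp add: hess_def pd1_def x DERIV_imp_deriv)
  have "((\<lambda>s. (ln s - ln (1 - a - s) + deriv f (a + s)) / 2) has_real_derivative (1 / b + gg f (a + b)) / 2) (at b)"
    using p ne by (auto intro!: derivative_eq_intros fdL simp: gg_def)
  then have "((\<lambda>s. pd2 (sympot f) (a, s)) has_real_derivative (1 / b + gg f (a + b)) / 2) (at b)"
    by (rule has_field_derivative_transform_within_open[OF _ S2]) (use p in \<open>auto simp: pd2_sympot[OF assms(1)] intP_iff\<close>)
  then show "hess (sympot f) x 2 2 = (1 / snd x + gg f (fst x + snd x)) / 2"
    by (simp add: hess_def pd2_def x DERIV_imp_deriv)
qed

definition FF :: "(real \<Rightarrow> real) \<Rightarrow> real \<Rightarrow> real" where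
  "FF f t = 1 + t * gg f t"

lemma quad_pos:
  fixes a b g v1 v2 :: real
  assumes "0 < a" "0 < b" "1 + (a + b) * g > 0" "(v1, v2) \<noteq> (0, 0)"
  shows "b * v1^2 + a * v2^2 + g * a * b * (v1 + v2)^2 > 0"
proof -
  have id: "(a + b) * (b * v1^2 + a * v2^2 + g * a * b * (v1 + v2)^2)
      = a * b * (v1 + v2)^2 * (1 + (a + b) * g) + (b * v1 - a * v2)^2"
    by (simp add: power2_eq_square algebra_simps)
  have "a * b * (v1 + v2)^2 * (1 + (a + b) * g) + (b * v1 - a * v2)^2 > 0"
  proof (cases "v1 + v2 = 0")
    case True
    then have "v2 = - v1" by simp
    with assms(4) have "v1 \<noteq> 0" by auto
    then have "(b * v1 - a * v2)^2 > 0" using \<open>v2 = - v1\<close> assms(1,2)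
      by (simp add: algebra_simps) (metis add_pos_pos distrib_right less_irrefl mult_eq_0_iff)
    then show ?thesis using True by simp
  next
    case False
    then have "a * b * (v1 + v2)^2 * (1 + (a + b) * g) > 0" using assms by simp
    then show ?thesis by (smt (verit) zero_le_power2)
  qed
  with id have "(a + b) * (b * v1^2 + a * v2^2 + g * a * b * (v1 + v2)^2) > 0" by simp
  then show ?thesis using assms(1,2) by (simp add: zero_less_mult_iff)
qed

lemma posdef_iff:
  assumes "D3 f" "x \<in> intP"
  shows "hess_posdef (sympot f) x \<longleftrightarrow> FF f (fst x + snd x) > 0"
proof -
  obtain a b where x: "x = (a,b)" by force
  have p: "0 < a" "0 < b" "a + b < 1" using assms(2) by (auto simp: intP_iff x)
  let ?g = "gg f (a + b)"
  have form: "v1 * (hess (sympot f) x 1 1 * v1 + hess (sympot f) x 1 2 * v2)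
    + v2 * (hess (sympot f) x 2 1 * v1 + hess (sympot f) x 2 2 * v2)
    = (b * v1^2 + a * v2^2 + ?g * a * b * (v1 + v2)^2) / (2 * a * b)" for v1 v2
    using p unfolding hess_sympot[OF assms] by (simp add: x field_simps power2_eq_square)
  show ?thesis
  proof
    assume "hess_posdef (sympot f) x"
    then have "(b * a^2 + a * b^2 + ?g * a * b * (a + b)^2) / (2 * a * b) > 0"
      using p unfolding hess_posdef_def form by (metis less_irrefl prod.inject)
    then have "b * a^2 + a * b^2 + ?g * a * b * (a + b)^2 > 0"
      using p by (simp add: zero_less_divide_iff) (smt (verit) mult_pos_pos)
    moreover have "b * a^2 + a * b^2 + ?g * a * b * (a + b)^2 = a * b * (a + b) * (1 + (a + b) * ?g)"
      by (simp add: power2_eq_square algebra_simps)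
    ultimately have "a * b * (a + b) * (1 + (a + b) * ?g) > 0" by simp
    then have "1 + (a + b) * ?g > 0" using p by (simp add: zero_less_mult_iff) (smt (verit) mult_pos_pos)
    then show "FF f (fst x + snd x) > 0" by (simp add: FF_def x mult.commute)
  next
    assume "FF f (fst x + snd x) > 0"
    then have g: "1 + (a + b) * ?g > 0" by (simp add: FF_def x)
    show "hess_posdef (sympot f) x"
      unfolding hess_posdef_def form
      using quad_pos[OF p(1,2) g] p by (auto intro!: divide_pos_pos)
  qed
qed

lemma det_formula:
  assumes "D3 f" "x \<in> intP"
  shows "hess_det (sympot f) x = FF f (fst x + snd x) / (4 * fst x * snd x)"
  using assms(2) unfolding hess_det_def hess_sympot[OF assms] by (simp add: FF_def intP_iff field_simps)

definition FFd :: "(real \<Rightarrow> real) \<Rightarrow> real \<Rightarrow> real" where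
  "FFd f t = gg f t + t * (1 / (1 - t)^2 + deriv (deriv (deriv f)) t)"

lemma FF_deriv:
  assumes "D3 f" "0 < t" "t < 1"
  shows "(FF f has_real_derivative FFd f t) (at t)"
proof -
  have d: "(deriv (deriv f) has_real_derivative deriv (deriv (deriv f)) t) (at t)"
    using assms by (auto simp: D3_def)
  have ne: "1 - t \<noteq> 0" using assms by auto
  have "((\<lambda>t. 1 + t * (1 / (1 - t) + deriv (deriv f) t)) has_real_derivative
     1 * (1 / (1 - t) + deriv (deriv f) t) + t * (1 / (1 - t)^2 + deriv (deriv (deriv f)) t)) (at t)"
    using ne by (auto intro!: derivative_eq_intros d simp: power2_eq_square)
  then have "((\<lambda>t. 1 + t * (1 / (1 - t) + deriv (deriv f) t)) has_real_derivative FFd f t) (at t)"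
    by (simp add: FFd_def gg_def)
  then show ?thesis unfolding FF_def gg_def by (simp add: fun_eq_iff)
qed

definition qq :: "(real \<Rightarrow> real) \<Rightarrow> real \<times> real \<Rightarrow> real" where
  "qq f y = FF f (fst y + snd y) / (4 * fst y * snd y)"

definition Dqq :: "(real \<Rightarrow> real) \<Rightarrow> real \<times> real \<Rightarrow> real \<times> real \<Rightarrow> real" where
  "Dqq f x h = (FFd f (fst x + snd x) * (fst h + snd h) * (4 * fst x * snd x)
      - FF f (fst x + snd x) * (4 * (fst h * snd x + fst x * snd h))) / (4 * fst x * snd x)^2"

lemma qq_deriv:
  assumes "D3 f" "x \<in> intP"
  shows "(qq f has_derivative Dqq f x) (at x)"
proof -
  obtain a b where x: "x = (a,b)" by force
  have p: "0 < a" "0 < b" "a + b < 1" using assms(2) by (auto simp: intP_iff x)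
  have F: "DERIV (FF f) (fst x + snd x) :> FFd f (fst x + snd x)"
    using FF_deriv[OF assms(1)] p x by auto
  have s: "((\<lambda>y. fst y + snd y) has_derivative (\<lambda>h. fst h + snd h)) (at x)"
    by (auto intro!: derivative_eq_intros)
  have c: "((\<lambda>y. FF f (fst y + snd y)) has_derivative (\<lambda>h. (fst h + snd h) * FFd f (fst x + snd x))) (at x)"
    using DERIV_compose_FDERIV[OF F s] .
  show ?thesis unfolding qq_def
    apply (rule has_derivative_eq_rhs)
     apply (rule derivative_intros c)+
    using p x by (auto simp: Dqq_def fun_eq_iff field_simps power2_eq_square)
qed

lemma V_deriv:
  assumes "D3 f" "x \<in> intP" "FF f (fst x + snd x) > 0"
  shows "(orbital_volume (sympot f) has_derivative
     (\<lambda>h. qq f x powr (-1/2) * (Dqq f x h * (-1/2) / qq f x))) (at x)"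
proof -
  have pos: "qq f x > 0" using assms(2,3) by (auto simp: qq_def intP_iff)
  have "((\<lambda>y. qq f y powr (-1/2)) has_derivative
     (\<lambda>h. qq f x powr (-1/2) * (0 * ln (qq f x) + Dqq f x h * (-1/2) / qq f x))) (at x)"
    by (rule has_derivative_powr[OF qq_deriv[OF assms(1,2)] _ pos]) (auto intro!: derivative_intros)
  then have "((\<lambda>y. qq f y powr (-1/2)) has_derivative
     (\<lambda>h. qq f x powr (-1/2) * (Dqq f x h * (-1/2) / qq f x))) (at x)" by simp
  moreover have "open intP" unfolding intP_def
    by (intro open_Collect_conj open_Collect_less continuous_intros)
  ultimately show ?thesis
    by (rule has_derivative_transform_within_open) (use assms in \<open>auto simp: orbital_volume_def det_formula qq_def\<close>)
qed

definition crit :: "(real \<Rightarrow> real) \<Rightarrow> real \<Rightarrow> bool" where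
  "crit f t \<longleftrightarrow> t * FFd f t = 2 * FF f t"

lemma minimal_fibre_iff:
  assumes "D3 f" "x \<in> intP" "FF f (fst x + snd x) > 0"
  shows "minimal_fibre f x \<longleftrightarrow> fst x = snd x \<and> crit f (fst x + snd x)"
proof -
  obtain a b where x: "x = (a,b)" by force
  have p: "0 < a" "0 < b" "a + b < 1" using assms(2) by (auto simp: intP_iff x)
  have pos: "qq f x > 0" using assms(2,3) by (auto simp: qq_def intP_iff)
  let ?L = "\<lambda>h. qq f x powr (-1/2) * (Dqq f x h * (-1/2) / qq f x)"
  have "minimal_fibre f x \<longleftrightarrow> ?L = (\<lambda>_. 0)"
    using has_derivative_unique[OF V_deriv[OF assms]] V_deriv[OF assms] assms(2)
    unfolding minimal_fibre_def by metis
  also have "\<dots> \<longleftrightarrow> (\<forall>h. Dqq f x h = 0)"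
    using pos by (auto simp: fun_eq_iff)
  also have "\<dots> \<longleftrightarrow> Dqq f x (1,0) = 0 \<and> Dqq f x (0,1) = 0"
  proof
    assume "Dqq f x (1,0) = 0 \<and> Dqq f x (0,1) = 0"
    then have "FFd f (a+b) * a = FF f (a+b)" "FFd f (a+b) * b = FF f (a+b)"
      using p by (auto simp: Dqq_def x field_simps)
    moreover have "Dqq f x h = (fst h * (4*b) * (FFd f (a+b)*a - FF f (a+b)) + snd h * (4*a)*(FFd f (a+b)*b - FF f (a+b)))/(4*a*b)^2" for h
      by (simp add: Dqq_def x algebra_simps)
    ultimately show "\<forall>h. Dqq f x h = 0" by simp
  qed auto
  also have "\<dots> \<longleftrightarrow> FFd f (a+b) * a = FF f (a+b) \<and> FFd f (a+b) * b = FF f (a+b)"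
    using p by (auto simp: Dqq_def x field_simps)
  also have "\<dots> \<longleftrightarrow> a = b \<and> crit f (a + b)"
  proof
    assume h: "FFd f (a+b) * a = FF f (a+b) \<and> FFd f (a+b) * b = FF f (a+b)"
    then have "FFd f (a+b) \<noteq> 0" using assms(3) x by auto
    with h have "a = b" by (metis mult_left_cancel)
    with h show "a = b \<and> crit f (a + b)" by (auto simp: crit_def algebra_simps)
  next
    assume "a = b \<and> crit f (a + b)"
    then show "FFd f (a+b) * a = FF f (a+b) \<and> FFd f (a+b) * b = FF f (a+b)"
      by (auto simp: crit_def algebra_simps)
  qed
  finally show ?thesis by (simp add: x)
qed

lemma smooth_D3:
  assumes "open U" "{0..1} \<subseteq> U" "smooth_on U f"
  shows "D3 f"
  unfolding D3_def
proof
  fix t :: real assume t: "t \<in> {0<..<1}"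
  then have tU: "t \<in> U" using assms(2) by auto
  have "((deriv ^^ n) f) differentiable (at t)" for n using assms(3) tU by (auto simp: smooth_on_def)
  from this[of 0] this[of 1] this[of 2] show "(f has_real_derivative deriv f t) (at t) \<and>
     (deriv f has_real_derivative deriv (deriv f) t) (at t) \<and>
     (deriv (deriv f) has_real_derivative deriv (deriv (deriv f)) t) (at t)"
    by (simp_all add: DERIV_deriv_iff_real_differentiable numeral_2_eq_2)
qed

lemma coh1_D3: "coh1_metric f \<Longrightarrow> D3 f"
  unfolding coh1_metric_def using smooth_D3 by blast

lemma coh1_FF: "coh1_metric f \<Longrightarrow> 0 < t \<Longrightarrow> t < 1 \<Longrightarrow> FF f t > 0"
proof -
  assume c: "coh1_metric f" and t: "0 < t" "t < 1"
  then have "(t/2, t/2) \<in> intP" by (simp add: intP_iff)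
  with c have "hess_posdef (sympot f) (t/2, t/2)" by (simp add: coh1_metric_def)
  then show ?thesis using posdef_iff[OF coh1_D3[OF c] \<open>(t/2, t/2) \<in> intP\<close>] by simp
qed

definition Qf :: "(real \<Rightarrow> real) \<Rightarrow> real \<Rightarrow> real" where
  "Qf f t = 3 * t - 2 + t * (1 - t)^2 * (t * deriv (deriv (deriv f)) t - deriv (deriv f) t)"

lemma crit_Qf:
  assumes "t < 1"
  shows "crit f t \<longleftrightarrow> Qf f t = 0"
proof -
  have ne: "1 - t \<noteq> 0" using assms by auto
  define u where "u = 1 / (1 - t)"
  have u: "u * (1 - t) = 1" using ne by (simp add: u_def)
  have u2: "1 / (1 - t)^2 = u^2" by (simp add: u_def power_one_over)
  have "(t * FFd f t - 2 * FF f t) * (1 - t)^2 = Qf f t"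
    unfolding FFd_def FF_def gg_def Qf_def u2 u_def[symmetric] using u by algebra
  then show ?thesis using ne by (auto simp: crit_def)
qed

lemma minimal_set:
  assumes "coh1_metric f"
  shows "{x. minimal_fibre f x} = (\<lambda>t. (t/2, t/2)) ` {t. 0 < t \<and> t < 1 \<and> Qf f t = 0}"
proof (intro equalityI subsetI)
  fix x assume "x \<in> {x. minimal_fibre f x}"
  then have m: "minimal_fibre f x" by simp
  then have xi: "x \<in> intP" by (simp add: minimal_fibre_def)
  then have FFp: "FF f (fst x + snd x) > 0" using coh1_FF[OF assms] by (auto simp: intP_iff)
  have "fst x = snd x \<and> crit f (fst x + snd x)"
    using minimal_fibre_iff[OF coh1_D3[OF assms] xi FFp] m by blast
  then have h: "fst x = snd x" "crit f (fst x + snd x)" by auto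
  have t1: "fst x + snd x < 1" "0 < fst x + snd x" using xi by (auto simp: intP_iff)
  have "Qf f (fst x + snd x) = 0" using crit_Qf[OF t1(1)] h(2) by simp
  moreover have "x = ((fst x + snd x)/2, (fst x + snd x)/2)" using h(1) by (simp add: prod_eq_iff)
  ultimately show "x \<in> (\<lambda>t. (t/2, t/2)) ` {t. 0 < t \<and> t < 1 \<and> Qf f t = 0}"
    using t1 by (intro image_eqI[where x="fst x + snd x"]) auto
next
  fix x assume "x \<in> (\<lambda>t. (t/2, t/2)) ` {t. 0 < t \<and> t < 1 \<and> Qf f t = 0}"
  then obtain t where t: "0 < t" "t < 1" "Qf f t = 0" and x: "x = (t/2, t/2)" by auto
  have xi: "x \<in> intP" using t x by (simp add: intP_iff)
  have FFp: "FF f (fst x + snd x) > 0" using coh1_FF[OF assms] t x by auto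
  show "x \<in> {x. minimal_fibre f x}"
    using minimal_fibre_iff[OF coh1_D3[OF assms] xi FFp] crit_Qf[of t f] t x by simp
qed

lemma partA: "coh1_metric f \<Longrightarrow> minimal_fibre f x \<Longrightarrow> fst x = snd x"
proof -
  assume "coh1_metric f" "minimal_fibre f x"
  then have "x \<in> (\<lambda>t. (t/2, t/2)) ` {t. 0 < t \<and> t < 1 \<and> Qf f t = 0}"
    using minimal_set[of f] by blast
  then show ?thesis by auto
qed


lemma real_deriv_transfer:
  fixes G :: "complex \<Rightarrow> complex" and g :: "real \<Rightarrow> real"
  assumes hol: "G holomorphic_on ball (of_real c) r"
    and eq: "\<And>t. \<bar>t - c\<bar> < r \<Longrightarrow> G (of_real t) = of_real (g t)"
    and t: "\<bar>t - c\<bar> < r"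
  shows "(g has_real_derivative Re (deriv G (of_real t))) (at t)"
    "deriv G (of_real t) = of_real (deriv g t)"
proof -
  have tin: "of_real t \<in> ball (of_real c :: complex) r"
    using t by (simp add: dist_norm abs_minus_commute flip: of_real_diff)
  have dG: "(G has_field_derivative deriv G (of_real t)) (at (of_real t))"
    using holomorphic_derivI[OF hol open_ball tin] .
  have v1: "((\<lambda>s. G (of_real s)) has_vector_derivative deriv G (of_real t)) (at t)"
    using has_vector_derivative_real_field[OF dG] .
  have op: "open {s. \<bar>s - c\<bar> < r}" "t \<in> {s. \<bar>s - c\<bar> < r}"
    using t by (auto intro!: open_Collect_less continuous_intros)
  have v2: "((\<lambda>s. complex_of_real (g s)) has_vector_derivative deriv G (of_real t)) (at t)"
    using v1 unfolding has_vector_derivative_def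
    by (rule has_derivative_transform_within_open[OF _ op]) (simp add: eq)
  have "((\<lambda>s. Re (complex_of_real (g s))) has_derivative (\<lambda>h. Re (h *\<^sub>R deriv G (of_real t)))) (at t)"
    using bounded_linear.has_derivative[OF bounded_linear_Re v2[unfolded has_vector_derivative_def]] .
  then have "(g has_derivative (\<lambda>h. h * Re (deriv G (of_real t)))) (at t)" by simp
  moreover have "(\<lambda>h. h * Re (deriv G (of_real t))) = (*) (Re (deriv G (of_real t)))"
    by (rule ext) simp
  ultimately show d: "(g has_real_derivative Re (deriv G (of_real t))) (at t)"
    unfolding has_field_derivative_def by metis
  have v3: "((\<lambda>s. complex_of_real (g s)) has_vector_derivative of_real (Re (deriv G (of_real t)))) (at t)"
    using has_vector_derivative_of_real[OF d] .
  have "deriv G (of_real t) = of_real (Re (deriv G (of_real t)))"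
    using vector_derivative_unique_at[OF v2 v3] .
  also have "Re (deriv G (of_real t)) = deriv g t" using DERIV_imp_deriv[OF d] by simp
  finally show "deriv G (of_real t) = of_real (deriv g t)" .
qed

lemma local_identity:
  fixes f :: "real \<Rightarrow> real" and a :: "nat \<Rightarrow> real"
  assumes r: "r > 0" and ser: "\<And>t. \<bar>t - c\<bar> < r \<Longrightarrow> (\<lambda>n. a n * (t - c)^n) sums f t"
    and lim: "c islimpt {t. Qf f t = 0}"
  shows "\<And>t. \<bar>t - c\<bar> < r \<Longrightarrow> Qf f t = 0"
proof -
  define F where "F z = (\<Sum>n. of_real (a n) * (z - of_real c)^n)" for z :: complex
  have sumsF: "(\<lambda>n. of_real (a n) * (z - of_real c)^n) sums F z" if z: "z \<in> ball (of_real c) r" for z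
  proof -
    obtain m where m: "m = norm (z - of_real c)" by simp
    define \<rho> where "\<rho> = (m + r) / 2"
    have nz: "m < r" using z m by (simp add: dist_norm norm_minus_commute)
    have n0: "0 \<le> m" using m by simp
    have rho1: "\<rho> < r" unfolding \<rho>_def using nz n0 by (simp add: field_simps)
    have rho2: "m < \<rho>" unfolding \<rho>_def using nz n0 by (simp add: field_simps)
    have rho3: "\<rho> > 0" unfolding \<rho>_def using nz n0 by (simp add: field_simps)
    note rho' = rho1 rho2 rho3
    then have rho: "\<rho> < r" "norm (z - of_real c) < \<rho>" "\<rho> > 0" using m by auto
    have "\<bar>(c + \<rho>) - c\<bar> < r" using rho by simp
    from ser[OF this] have "summable (\<lambda>n. a n * \<rho>^n)" by (simp add: sums_summable)
    then have "summable (\<lambda>n. complex_of_real (a n * \<rho>^n))" by (simp only: summable_complex_of_real)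
    moreover have "(\<lambda>n. complex_of_real (a n * \<rho>^n)) = (\<lambda>n. complex_of_real (a n) * (complex_of_real \<rho>)^n)"
      by simp
    ultimately have "summable (\<lambda>n. complex_of_real (a n) * (complex_of_real \<rho>)^n)" by simp
    from powser_inside[OF this, of "z - of_real c"] rho
    have "summable (\<lambda>n. of_real (a n) * (z - of_real c)^n)" by simp
    then show ?thesis unfolding F_def by (rule summable_sums)
  qed
  have hol: "F holomorphic_on ball (of_real c) r"
    by (rule power_series_holomorphic[where a = "\<lambda>n. of_real (a n)"]) (rule sumsF)
  have eqF: "F (of_real t) = of_real (f t)" if t: "\<bar>t - c\<bar> < r" for t
  proof -
    have tin: "of_real t \<in> ball (of_real c :: complex) r"
      using t by (simp add: dist_norm abs_minus_commute flip: of_real_diff)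
    have "(\<lambda>n. complex_of_real (a n * (t - c)^n)) sums of_real (f t)"
      using ser[OF t] by (simp only: sums_of_real_iff)
    moreover have "(\<lambda>n. complex_of_real (a n * (t - c)^n)) sums F (of_real t)"
      using sumsF[OF tin] by simp
    ultimately show ?thesis by (metis sums_unique2)
  qed
  define F1 where "F1 = deriv F"
  define F2 where "F2 = deriv F1"
  define F3 where "F3 = deriv F2"
  have hol1: "F1 holomorphic_on ball (of_real c) r" unfolding F1_def by (intro holomorphic_deriv hol open_ball)
  have hol2: "F2 holomorphic_on ball (of_real c) r" unfolding F2_def by (intro holomorphic_deriv hol1 open_ball)
  have hol3: "F3 holomorphic_on ball (of_real c) r" unfolding F3_def by (intro holomorphic_deriv hol2 open_ball)
  have e1: "F1 (of_real t) = of_real (deriv f t)" if "\<bar>t - c\<bar> < r" for t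
    unfolding F1_def by (rule real_deriv_transfer(2)[OF hol eqF that])
  have e2: "F2 (of_real t) = of_real (deriv (deriv f) t)" if "\<bar>t - c\<bar> < r" for t
    unfolding F2_def by (rule real_deriv_transfer(2)[OF hol1 e1 that])
  have e3: "F3 (of_real t) = of_real (deriv (deriv (deriv f)) t)" if "\<bar>t - c\<bar> < r" for t
    unfolding F3_def by (rule real_deriv_transfer(2)[OF hol2 e2 that])
  define H where "H z = 3 * z - 2 + z * (1 - z)^2 * (z * F3 z - F2 z)" for z
  have holH: "H holomorphic_on ball (of_real c) r"
    unfolding H_def by (intro holomorphic_intros hol2 hol3)
  have eqH: "H (of_real t) = of_real (Qf f t)" if "\<bar>t - c\<bar> < r" for t
    using e2[OF that] e3[OF that] by (simp add: H_def Qf_def)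
  have limC: "of_real c islimpt (complex_of_real ` {t. \<bar>t - c\<bar> < r \<and> Qf f t = 0})"
    unfolding islimpt_approachable
  proof (intro allI impI)
    fix e :: real assume e: "e > 0"
    obtain t where t: "t \<in> {t. Qf f t = 0}" "t \<noteq> c" "dist t c < min e r"
      using lim e r unfolding islimpt_approachable by (metis min_less_iff_conj)
    show "\<exists>x'\<in>complex_of_real ` {t. \<bar>t - c\<bar> < r \<and> Qf f t = 0}. x' \<noteq> of_real c \<and> dist x' (of_real c) < e"
      using t by (intro bexI[of _ "of_real t"]) (auto simp: dist_real_def)
  qed
  fix t assume t: "\<bar>t - c\<bar> < r"
  have "H (of_real t) = 0"
  proof (rule analytic_continuation[OF holH open_ball connected_ball _ _ limC])
    show "complex_of_real ` {t. \<bar>t - c\<bar> < r \<and> Qf f t = 0} \<subseteq> ball (of_real c) r"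
      by (auto simp: dist_norm abs_minus_commute simp flip: of_real_diff)
    show "of_real c \<in> ball (of_real c :: complex) r" using r by simp
    show "H z = 0" if "z \<in> complex_of_real ` {t. \<bar>t - c\<bar> < r \<and> Qf f t = 0}" for z
      using that eqH by auto
    show "of_real t \<in> ball (of_real c :: complex) r"
      using t by (simp add: dist_norm abs_minus_commute flip: of_real_diff)
  qed
  with eqH[OF t] show "Qf f t = 0" by simp
qed

lemma analytic_zeros_finite:
  fixes f :: "real \<Rightarrow> real"
  assumes "analytic_metric f"
  shows "finite {t. 0 < t \<and> t < 1 \<and> Qf f t = 0}"
proof (rule ccontr)
  assume inf: "infinite {t. 0 < t \<and> t < 1 \<and> Qf f t = 0}"
  obtain U where U: "open U" "{0..1} \<subseteq> U" "real_analytic_on U f"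
    using assms by (auto simp: analytic_metric_def)
  define Z where "Z = {t. Qf f t = 0}"
  have loc: "c \<in> interior Z" if c: "c \<in> {0..1}" "c islimpt Z" for c
  proof -
    from c U obtain r a where r: "r > 0" "\<forall>t. \<bar>t - c\<bar> < r \<longrightarrow> (\<lambda>n. a n * (t - c)^n) sums f t"
      unfolding real_analytic_on_def by blast
    have "\<And>t. \<bar>t - c\<bar> < r \<Longrightarrow> Qf f t = 0"
      by (rule local_identity[OF r(1)]) (use r(2) c(2) Z_def in auto)
    then have "ball c r \<subseteq> Z" by (auto simp: Z_def dist_real_def abs_minus_commute)
    then show ?thesis using r(1) mem_interior by blast
  qed
  have "compact {0..1::real}" by simp
  then obtain c where c: "c \<in> {0..1}" "c islimpt {t. 0 < t \<and> t < 1 \<and> Qf f t = 0}"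
    using inf unfolding compact_eq_Bolzano_Weierstrass by (metis (no_types, lifting) atLeastAtMost_iff mem_Collect_eq order_less_imp_le subsetI)
  then have "c islimpt Z" by (intro islimpt_subset[OF c(2)]) (auto simp: Z_def)
  define T where "T = {0..1} \<inter> interior Z"
  have cT: "c \<in> T" using loc[OF c(1) \<open>c islimpt Z\<close>] c(1) by (simp add: T_def)
  have op: "openin (top_of_set {0..1}) T" unfolding T_def by (rule openin_open_Int) simp
  have cl: "closedin (top_of_set {0..1}) T"
    unfolding closedin_limpt
  proof (intro conjI allI impI)
    show "T \<subseteq> {0..1}" by (auto simp: T_def)
    fix x assume x: "x islimpt T \<and> x \<in> {0..(1::real)}"
    have "T \<subseteq> Z" using interior_subset by (auto simp: T_def)
    then have "x islimpt Z" using x islimpt_subset by blast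
    then show "x \<in> T" using loc x by (auto simp: T_def)
  qed
  have "T = {} \<or> T = {0..1}"
    using connected_Icc[of "0::real" 1] op cl unfolding connected_clopen by blast
  then have "(0::real) \<in> T" using cT by auto
  then have "Qf f 0 = 0" using interior_subset by (auto simp: T_def Z_def)
  then show False by (simp add: Qf_def)
qed

lemma partB: "coh1_metric f \<Longrightarrow> analytic_metric f \<Longrightarrow> finite {x. minimal_fibre f x}"
  using minimal_set[of f] analytic_zeros_finite[of f] by simp


definition dclosed :: "real set \<Rightarrow> (real \<Rightarrow> real) set \<Rightarrow> bool" where
  "dclosed S C \<longleftrightarrow> (\<forall>h\<in>C. \<exists>h'\<in>C. \<forall>t\<in>S. (h has_real_derivative h' t) (at t))"

definition sm :: "real set \<Rightarrow> (real \<Rightarrow> real) \<Rightarrow> bool" where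
  "sm S g \<longleftrightarrow> (\<exists>C. dclosed S C \<and> g \<in> C)"

lemma sm_D:
  assumes "sm S g"
  obtains g' where "sm S g'" "\<And>t. t \<in> S \<Longrightarrow> (g has_real_derivative g' t) (at t)"
proof -
  from assms obtain C where C: "dclosed S C" "g \<in> C" by (auto simp: sm_def)
  then obtain g' where "g' \<in> C" "\<forall>t\<in>S. (g has_real_derivative g' t) (at t)"
    unfolding dclosed_def by blast
  with C(1) show ?thesis using that by (auto simp: sm_def)
qed

lemma sm_intro:
  assumes "sm S g'" "\<And>t. t \<in> S \<Longrightarrow> (g has_real_derivative g' t) (at t)"
  shows "sm S g"
proof -
  from assms(1) obtain C where C: "dclosed S C" "g' \<in> C" by (auto simp: sm_def)
  have "dclosed S (insert g C)"
    using C assms(2) unfolding dclosed_def by blast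
  then show ?thesis by (auto simp: sm_def)
qed

lemma sm_coinduct:
  assumes "g \<in> C" "\<And>h. h \<in> C \<Longrightarrow> \<exists>h'. (h' \<in> C \<or> sm S h') \<and> (\<forall>t\<in>S. (h has_real_derivative h' t) (at t))"
  shows "sm S g"
proof -
  let ?C = "C \<union> {h. sm S h}"
  have "dclosed S ?C"
    unfolding dclosed_def
  proof
    fix h assume "h \<in> ?C"
    then show "\<exists>h'\<in>?C. \<forall>t\<in>S. (h has_real_derivative h' t) (at t)"
    proof
      assume "h \<in> C" then show ?thesis using assms(2) by blast
    next
      assume "h \<in> {h. sm S h}"
      then have "sm S h" by simp
      then obtain h' where "sm S h'" "\<And>t. t \<in> S \<Longrightarrow> (h has_real_derivative h' t) (at t)"
        by (rule sm_D) blast+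
      then show ?thesis by blast
    qed
  qed
  with assms(1) show ?thesis by (auto simp: sm_def)
qed

lemma sm_smooth_on:
  assumes S: "open S" and g: "sm S g"
  shows "smooth_on S g"
proof -
  have "\<exists>h. sm S h \<and> (\<forall>t\<in>S. (deriv ^^ n) g t = h t)" for n
  proof (induction n)
    case 0 then show ?case using g by auto
  next
    case (Suc n)
    then obtain h where h: "sm S h" "\<And>t. t \<in> S \<Longrightarrow> (deriv ^^ n) g t = h t" by blast
    obtain h' where h': "sm S h'" "\<And>t. t \<in> S \<Longrightarrow> (h has_real_derivative h' t) (at t)"
      using h(1) by (rule sm_D) blast+
    have "(deriv ^^ Suc n) g t = h' t" if t: "t \<in> S" for t
    proof -
      have "eventually (\<lambda>x. (deriv ^^ n) g x = h x) (nhds t)"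
        using S t h(2) by (intro eventually_nhds_in_open[THEN eventually_mono]) auto
      then have "deriv ((deriv ^^ n) g) t = deriv h t" by (rule deriv_cong_ev) simp
      also have "\<dots> = h' t" using h'(2)[OF t] by (rule DERIV_imp_deriv)
      finally show ?thesis by simp
    qed
    with h' show ?case by blast
  qed
  then show ?thesis unfolding smooth_on_def
  proof (intro allI ballI)
    fix n t assume all: "\<And>n. \<exists>h. sm S h \<and> (\<forall>t\<in>S. (deriv ^^ n) g t = h t)" and t: "t \<in> S"
    obtain h where h: "sm S h" "\<And>t. t \<in> S \<Longrightarrow> (deriv ^^ n) g t = h t" using all by blast
    obtain h' where h': "sm S h'" "\<And>t. t \<in> S \<Longrightarrow> (h has_real_derivative h' t) (at t)"
      using h(1) by (rule sm_D) blast+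
    have "((deriv ^^ n) g has_real_derivative h' t) (at t)"
      by (rule has_field_derivative_transform_within_open[OF h'(2)[OF t] S t]) (simp add: h(2))
    then show "(deriv ^^ n) g differentiable (at t)" using real_differentiable_def by blast
  qed
qed

lemma sm_subset:
  assumes "sm S g" "S' \<subseteq> S" shows "sm S' g"
proof -
  from assms(1) obtain C where C: "dclosed S C" "g \<in> C" by (auto simp: sm_def)
  have "dclosed S' C" unfolding dclosed_def
  proof
    fix h assume "h \<in> C"
    then obtain h' where "h' \<in> C" "\<forall>t\<in>S. (h has_real_derivative h' t) (at t)"
      using C(1) unfolding dclosed_def by blast
    then show "\<exists>h'\<in>C. \<forall>t\<in>S'. (h has_real_derivative h' t) (at t)" using assms(2) by blast
  qed
  with C(2) show ?thesis by (auto simp: sm_def)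
qed

lemma sm_eq_on:
  assumes S: "open S" and g: "sm S g" and eq: "\<And>t. t \<in> S \<Longrightarrow> f t = g t"
  shows "sm S f"
proof -
  obtain g' where g': "sm S g'" "\<And>t. t \<in> S \<Longrightarrow> (g has_real_derivative g' t) (at t)"
    using g by (rule sm_D) blast+
  show ?thesis
    by (rule sm_intro[OF g'(1)], rule has_field_derivative_transform_within_open[OF g'(2) S])
       (auto simp: eq)
qed

lemma sm_const: "sm S (\<lambda>t. c)"
proof (rule sm_coinduct[where C = "range (\<lambda>c. \<lambda>t. c)"])
  show "(\<lambda>t. c) \<in> range (\<lambda>c. \<lambda>t. c)" by blast
  fix h :: "real \<Rightarrow> real" assume "h \<in> range (\<lambda>c. \<lambda>t. c)"
  then obtain d where h: "h = (\<lambda>t. d)" by blast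
  have "(\<lambda>t. 0) \<in> range (\<lambda>c. \<lambda>t. c :: real)" by blast
  moreover have "\<forall>t\<in>S. (h has_real_derivative (\<lambda>t. 0) t) (at t)" using h by simp
  ultimately show "\<exists>h'. (h' \<in> range (\<lambda>c. \<lambda>t. c) \<or> sm S h') \<and> (\<forall>t\<in>S. (h has_real_derivative h' t) (at t))"
    by blast
qed

lemma sm_id: "sm S (\<lambda>t. t)"
  by (rule sm_intro[OF sm_const[of S 1]]) auto

lemma sm_add:
  assumes "sm S f" "sm S g"
  shows "sm S (\<lambda>t. f t + g t)"
proof (rule sm_coinduct[where C = "{\<lambda>t. f t + g t | f g. sm S f \<and> sm S g}"])
  show "(\<lambda>t. f t + g t) \<in> {\<lambda>t. f t + g t | f g. sm S f \<and> sm S g}" using assms by blast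
  fix h assume "h \<in> {\<lambda>t. f t + g t | f g. sm S f \<and> sm S g}"
  then obtain f g where h: "h = (\<lambda>t. f t + g t)" "sm S f" "sm S g" by blast
  obtain f' where f': "sm S f'" "\<And>t. t \<in> S \<Longrightarrow> (f has_real_derivative f' t) (at t)" using h(2) by (rule sm_D) blast+
  obtain g' where g': "sm S g'" "\<And>t. t \<in> S \<Longrightarrow> (g has_real_derivative g' t) (at t)" using h(3) by (rule sm_D) blast+
  have "(\<lambda>t. f' t + g' t) \<in> {\<lambda>t. f t + g t | f g. sm S f \<and> sm S g}" using f'(1) g'(1) by blast
  moreover have "\<forall>t\<in>S. (h has_real_derivative f' t + g' t) (at t)"
    using f'(2) g'(2) h(1) by (auto intro!: derivative_intros)
  ultimately show "\<exists>h'. (h' \<in> {\<lambda>t. f t + g t | f g. sm S f \<and> sm S g} \<or> sm S h') \<and> (\<forall>t\<in>S. (h has_real_derivative h' t) (at t))"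
    by blast
qed

inductive_set prodc :: "real set \<Rightarrow> (real \<Rightarrow> real) set" for S where
  pc_mult: "sm S a \<Longrightarrow> sm S b \<Longrightarrow> (\<lambda>t. a t * b t) \<in> prodc S"
| pc_add: "h1 \<in> prodc S \<Longrightarrow> h2 \<in> prodc S \<Longrightarrow> (\<lambda>t. h1 t + h2 t) \<in> prodc S"

lemma prodc_deriv: "h \<in> prodc S \<Longrightarrow> \<exists>h'\<in>prodc S. \<forall>t\<in>S. (h has_real_derivative h' t) (at t)"
proof (induction rule: prodc.induct)
  case (pc_mult a b)
  obtain a' where a': "sm S a'" "\<And>t. t \<in> S \<Longrightarrow> (a has_real_derivative a' t) (at t)" using pc_mult(1) by (rule sm_D) blast+
  obtain b' where b': "sm S b'" "\<And>t. t \<in> S \<Longrightarrow> (b has_real_derivative b' t) (at t)" using pc_mult(2) by (rule sm_D) blast+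
  have "(\<lambda>t. a' t * b t + a t * b' t) \<in> prodc S"
    using pc_mult a' b' by (intro prodc.pc_add prodc.pc_mult) auto
  moreover have "\<forall>t\<in>S. ((\<lambda>t. a t * b t) has_real_derivative a' t * b t + a t * b' t) (at t)"
    using a' b' by (auto intro!: derivative_eq_intros)
  ultimately show ?case by (intro bexI[of _ "\<lambda>t. a' t * b t + a t * b' t"]) simp_all
next
  case (pc_add h1 h2)
  then obtain h1' h2' where "h1' \<in> prodc S" "\<forall>t\<in>S. (h1 has_real_derivative h1' t) (at t)"
    "h2' \<in> prodc S" "\<forall>t\<in>S. (h2 has_real_derivative h2' t) (at t)" by blast
  then show ?case by (intro bexI[of _ "\<lambda>t. h1' t + h2' t"] prodc.pc_add) (auto intro!: derivative_intros)
qed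

lemma sm_mult:
  assumes "sm S f" "sm S g"
  shows "sm S (\<lambda>t. f t * g t)"
proof (rule sm_coinduct[where C = "prodc S"])
  show "(\<lambda>t. f t * g t) \<in> prodc S" using assms by (rule prodc.pc_mult)
  fix h assume "h \<in> prodc S"
  then obtain h' where "h' \<in> prodc S" "\<forall>t\<in>S. (h has_real_derivative h' t) (at t)"
    using prodc_deriv by blast
  then show "\<exists>h'. (h' \<in> prodc S \<or> sm S h') \<and> (\<forall>t\<in>S. (h has_real_derivative h' t) (at t))" by blast
qed

inductive_set compc :: "real set \<Rightarrow> real set \<Rightarrow> (real \<Rightarrow> real) \<Rightarrow> (real \<Rightarrow> real) set" for S T g where
  cc_mult: "sm T H \<Longrightarrow> sm S k \<Longrightarrow> (\<lambda>t. H (g t) * k t) \<in> compc S T g"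
| cc_add: "h1 \<in> compc S T g \<Longrightarrow> h2 \<in> compc S T g \<Longrightarrow> (\<lambda>t. h1 t + h2 t) \<in> compc S T g"

lemma compc_deriv:
  assumes g: "sm S g" and gT: "\<And>t. t \<in> S \<Longrightarrow> g t \<in> T"
  shows "h \<in> compc S T g \<Longrightarrow> \<exists>h'\<in>compc S T g. \<forall>t\<in>S. (h has_real_derivative h' t) (at t)"
proof (induction rule: compc.induct)
  case (cc_mult H k)
  obtain H' where H': "sm T H'" "\<And>t. t \<in> T \<Longrightarrow> (H has_real_derivative H' t) (at t)" using cc_mult(1) by (rule sm_D) blast+
  obtain k' where k': "sm S k'" "\<And>t. t \<in> S \<Longrightarrow> (k has_real_derivative k' t) (at t)" using cc_mult(2) by (rule sm_D) blast+
  obtain g' where g': "sm S g'" "\<And>t. t \<in> S \<Longrightarrow> (g has_real_derivative g' t) (at t)" using g by (rule sm_D) blast+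
  have "(\<lambda>t. H' (g t) * (g' t * k t) + H (g t) * k' t) \<in> compc S T g"
    using cc_mult H' k' g' by (intro compc.cc_add compc.cc_mult sm_mult) auto
  moreover have "\<forall>t\<in>S. ((\<lambda>t. H (g t) * k t) has_real_derivative H' (g t) * (g' t * k t) + H (g t) * k' t) (at t)"
  proof
    fix t assume t: "t \<in> S"
    have "((\<lambda>t. H (g t)) has_real_derivative H' (g t) * g' t) (at t)"
      using DERIV_chain2[OF H'(2)[OF gT[OF t]] g'(2)[OF t]] .
    then show "((\<lambda>t. H (g t) * k t) has_real_derivative H' (g t) * (g' t * k t) + H (g t) * k' t) (at t)"
      using k'(2)[OF t] by (auto intro!: derivative_eq_intros simp: algebra_simps)
  qed
  ultimately show ?case by (intro bexI[of _ "\<lambda>t. H' (g t) * (g' t * k t) + H (g t) * k' t"]) simp_all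
next
  case (cc_add h1 h2)
  then obtain h1' h2' where "h1' \<in> compc S T g" "\<forall>t\<in>S. (h1 has_real_derivative h1' t) (at t)"
    "h2' \<in> compc S T g" "\<forall>t\<in>S. (h2 has_real_derivative h2' t) (at t)" by blast
  then show ?case by (intro bexI[of _ "\<lambda>t. h1' t + h2' t"] compc.cc_add) (auto intro!: derivative_intros)
qed

lemma sm_comp:
  assumes F: "sm T F" and g: "sm S g" and gT: "\<And>t. t \<in> S \<Longrightarrow> g t \<in> T"
  shows "sm S (\<lambda>t. F (g t))"
proof (rule sm_coinduct[where C = "compc S T g"])
  have "(\<lambda>t. F (g t) * 1) \<in> compc S T g" using F sm_const by (rule compc.cc_mult)
  then show "(\<lambda>t. F (g t)) \<in> compc S T g" by simp
  fix h assume "h \<in> compc S T g"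
  then obtain h' where "h' \<in> compc S T g" "\<forall>t\<in>S. (h has_real_derivative h' t) (at t)"
    using compc_deriv[OF g gT] by blast
  then show "\<exists>h'. (h' \<in> compc S T g \<or> sm S h') \<and> (\<forall>t\<in>S. (h has_real_derivative h' t) (at t))" by blast
qed

lemma sm_exp: "sm S exp"
proof (rule sm_coinduct[where C = "{exp}"])
  fix h assume "h \<in> {exp :: real \<Rightarrow> real}"
  then show "\<exists>h'. (h' \<in> {exp} \<or> sm S h') \<and> (\<forall>t\<in>S. (h has_real_derivative h' t) (at t))"
    by (intro exI[of _ exp]) (auto intro!: derivative_eq_intros)
qed simp

lemma sm_inverse: "sm {0<..} inverse"
proof -
  define IC :: "(real \<Rightarrow> real) set" where "IC = {\<lambda>t. c * inverse t ^ k | c k. True}"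
  show ?thesis
  proof (rule sm_coinduct[where C = IC])
    show "inverse \<in> IC" unfolding IC_def
      by (rule CollectI, rule exI[of _ 1], rule exI[of _ 1]) (simp add: fun_eq_iff)
    fix h assume "h \<in> IC"
    then obtain c :: real and k :: nat where h: "h = (\<lambda>t. c * inverse t ^ k)" unfolding IC_def by blast
    have "(\<lambda>t. (- c * real k) * inverse t ^ Suc k) \<in> IC" unfolding IC_def by blast
    moreover have "\<forall>t\<in>{0<..}. (h has_real_derivative (- c * real k) * inverse t ^ Suc k) (at t)"
    proof
      fix t :: real assume t: "t \<in> {0<..}"
      have d: "((\<lambda>t. c * inverse t ^ k) has_real_derivative c * (real k * inverse t ^ (k - 1) * (- (inverse t ^ 2)))) (at t)"
        using t by (auto intro!: derivative_eq_intros simp: power2_eq_square)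
      have e: "c * (real k * inverse t ^ (k - 1) * (- (inverse t ^ 2))) = (- c * real k) * inverse t ^ Suc k"
        by (cases k) (auto simp: power2_eq_square)
      show "(h has_real_derivative (- c * real k) * inverse t ^ Suc k) (at t)" using d unfolding h e .
    qed
    ultimately show "\<exists>h'. (h' \<in> IC \<or> sm {0<..} h') \<and> (\<forall>t\<in>{0<..}. (h has_real_derivative h' t) (at t))"
      by blast
  qed
qed

lemma sm_ln: "sm {0<..} ln"
  by (rule sm_intro[OF sm_inverse]) (auto intro!: derivative_eq_intros simp: field_simps)

lemma sm_div:
  assumes "sm S f" "sm S g" "\<And>t. t \<in> S \<Longrightarrow> g t > 0"
  shows "sm S (\<lambda>t. f t / g t)"
proof -
  have "sm S (\<lambda>t. inverse (g t))" using sm_comp[OF sm_inverse assms(2)] assms(3) by auto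
  from sm_mult[OF assms(1) this] show ?thesis by (simp add: divide_inverse)
qed

definition flatp :: "real poly \<Rightarrow> real \<Rightarrow> real" where
  "flatp p t = (if t > 0 then poly p (inverse t) * exp (- inverse t) else 0)"

lemma poly_exp_lim: "((\<lambda>x. poly p x * exp (- x)) \<longlongrightarrow> (0::real)) at_top"
proof -
  have eq: "poly p x * exp (- x) = (\<Sum>i\<le>degree p. coeff p i * (x ^ i / exp x))" for x :: real
    by (simp add: poly_altdef sum_distrib_right exp_minus divide_inverse mult.assoc)
  show ?thesis unfolding eq
    by (intro tendsto_null_sum tendsto_mult_right_zero tendsto_power_div_exp_0)
qed

lemma flatp_lim0: "(flatp p \<longlongrightarrow> 0) (at 0)"
proof (rule filterlim_split_at)
  have ev: "eventually (\<lambda>x. x \<in> {-1<..<0}) (at_left (0::real))"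
    by (rule eventually_at_left_real) simp
  have "eventually (\<lambda>y. 0 = flatp p y) (at_left (0::real))"
    using ev by eventually_elim (auto simp: flatp_def)
  then show "(flatp p \<longlongrightarrow> 0) (at_left 0)"
    by (rule Lim_transform_eventually[OF tendsto_const])
  have "((\<lambda>y. poly p (inverse y) * exp (- inverse y)) \<longlongrightarrow> 0) (at_right (0::real))"
    using filterlim_compose[OF poly_exp_lim filterlim_inverse_at_top_right] by simp
  moreover have "eventually (\<lambda>y. poly p (inverse y) * exp (- inverse y) = flatp p y) (at_right (0::real))"
    using eventually_at_right_less[of "0::real"] by eventually_elim (auto simp: flatp_def)
  ultimately show "(flatp p \<longlongrightarrow> 0) (at_right 0)"
    by (rule Lim_transform_eventually)
qed

lemma flatp_0 [simp]: "flatp p 0 = 0"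
  by (simp add: flatp_def)

lemma flatp_deriv0: "(flatp p has_real_derivative 0) (at 0)"
proof -
  have "(\<lambda>y. (flatp p y - flatp p 0) / (y - 0)) = flatp (pCons 0 p)"
    by (rule ext) (auto simp: flatp_def divide_inverse mult_ac)
  then show ?thesis unfolding has_field_derivative_iff using flatp_lim0 by simp
qed

definition dflat :: "real poly \<Rightarrow> real poly" where
  "dflat p = [:0, 0, 1:] * (p - pderiv p)"

lemma flatp_deriv: "(flatp p has_real_derivative flatp (dflat p) t) (at t)"
proof (cases "t > 0")
  case True
  have op: "open {0::real<..}" "t \<in> {0<..}" using True by auto
  have "((\<lambda>s. poly p (inverse s) * exp (- inverse s)) has_real_derivative
      poly (pderiv p) (inverse t) * (- (inverse t * inverse t)) * exp (- inverse t)
      + poly p (inverse t) * (exp (- inverse t) * (inverse t * inverse t))) (at t)"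
    using True by (auto intro!: derivative_eq_intros DERIV_chain2[OF poly_DERIV] simp: power2_eq_square)
  moreover have "poly (pderiv p) (inverse t) * (- (inverse t * inverse t)) * exp (- inverse t)
      + poly p (inverse t) * (exp (- inverse t) * (inverse t * inverse t)) = flatp (dflat p) t"
    using True by (simp add: flatp_def dflat_def algebra_simps)
  ultimately have "((\<lambda>s. poly p (inverse s) * exp (- inverse s)) has_real_derivative flatp (dflat p) t) (at t)"
    by simp
  then show ?thesis
    by (rule has_field_derivative_transform_within_open[OF _ op]) (auto simp: flatp_def)
next
  case False
  show ?thesis
  proof (cases "t = 0")
    case True then show ?thesis using flatp_deriv0 by simp
  next
    case False
    with \<open>\<not> t > 0\<close> have t: "t < 0" by simp
    have op: "open {..<0::real}" "t \<in> {..<0}" using t by auto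
    have "((\<lambda>s. 0) has_real_derivative flatp (dflat p) t) (at t)" using t by (simp add: flatp_def)
    then show ?thesis
      by (rule has_field_derivative_transform_within_open[OF _ op]) (auto simp: flatp_def)
  qed
qed

lemma sm_flatp: "sm S (flatp p)"
proof (rule sm_coinduct[where C = "range flatp"])
  fix h assume "h \<in> range flatp"
  then obtain q where "h = flatp q" by blast
  then show "\<exists>h'. (h' \<in> range flatp \<or> sm S h') \<and> (\<forall>t\<in>S. (h has_real_derivative h' t) (at t))"
    using flatp_deriv by blast
qed simp

definition flat :: "real \<Rightarrow> real" where "flat = flatp 1"

lemma flat_pos: "t > 0 \<Longrightarrow> flat t > 0" by (simp add: flat_def flatp_def)
lemma flat_zero: "t \<le> 0 \<Longrightarrow> flat t = 0" by (simp add: flat_def flatp_def)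
lemma flat_nonneg: "flat t \<ge> 0" by (simp add: flat_def flatp_def)

lemma sm_flat: "sm S flat" unfolding flat_def by (rule sm_flatp)

definition stp :: "real \<Rightarrow> real" where "stp t = flat t / (flat t + flat (1 - t))"

lemma stp_den_pos: "flat t + flat (1 - t) > 0"
proof (cases "t > 0")
  case True then show ?thesis using flat_pos[of t] flat_nonneg[of "1 - t"] by simp
next
  case False then have "1 - t > 0" by simp
  then show ?thesis using flat_pos[of "1 - t"] flat_nonneg[of t] by simp
qed

lemma stp_zero: "t \<le> 0 \<Longrightarrow> stp t = 0" by (simp add: stp_def flat_zero)
lemma stp_one: "t \<ge> 1 \<Longrightarrow> stp t = 1"
  using flat_pos[of t] by (simp add: stp_def flat_zero)

lemma sm_affine: "sm S (\<lambda>t. a * t + b)"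
  by (intro sm_add sm_mult sm_const sm_id)

lemma sm_stp: "sm S stp"
proof -
  have "sm S (\<lambda>t. flat (1 - t))"
    using sm_comp[OF sm_flat sm_affine[of S "-1" 1], of UNIV] by simp
  then have "sm S (\<lambda>t. flat t / (flat t + flat (1 - t)))"
    by (intro sm_div sm_flat sm_add stp_den_pos)
  then show ?thesis by (simp add: stp_def[abs_def])
qed

definition chi :: "real \<Rightarrow> real" where "chi t = stp (5 * t - 1) * stp (4 - 5 * t)"

lemma sm_chi: "sm S chi"
proof -
  have "sm S (\<lambda>t. stp (5 * t + (-1)))" using sm_comp[OF sm_stp sm_affine[of S 5 "-1"], of UNIV] by simp
  moreover have "sm S (\<lambda>t. stp ((-5) * t + 4))" using sm_comp[OF sm_stp sm_affine[of S "-5" 4], of UNIV] by simp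
  ultimately have "sm S (\<lambda>t. stp (5 * t + (-1)) * stp ((-5) * t + 4))" by (rule sm_mult)
  then show ?thesis by (simp add: chi_def[abs_def])
qed

lemma chi_zero: "t \<le> 1/5 \<or> t \<ge> 4/5 \<Longrightarrow> chi t = 0"
  by (auto simp: chi_def stp_zero)

lemma chi_one: "2/5 \<le> t \<Longrightarrow> t \<le> 3/5 \<Longrightarrow> chi t = 1"
  by (simp add: chi_def stp_one)

definition LL :: "real \<Rightarrow> real" where "LL t = t * ln t + (1 - t) * ln (1 - t)"

lemma sm_LL: "sm {0<..<1} LL"
proof -
  have l1: "sm {0<..<1} (\<lambda>t. ln t)" by (rule sm_subset[OF sm_ln]) auto
  have "sm {0<..<1} (\<lambda>t. ln ((-1) * t + 1))"
    by (rule sm_comp[OF sm_ln sm_affine]) auto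
  then have l2: "sm {0<..<1} (\<lambda>t. ln (1 - t))" by simp
  have "sm {0<..<1} (\<lambda>t. t * ln t + ((-1) * t + 1) * ln (1 - t))"
    by (intro sm_add sm_mult sm_id l1 l2 sm_affine)
  then show ?thesis by (simp add: LL_def[abs_def])
qed

definition Phi :: "real \<Rightarrow> real" where "Phi t = - (chi t * LL t)"

lemma sm_Phi01: "sm {0<..<1} Phi"
proof -
  have "sm {0<..<1} (\<lambda>t. (-1) * (chi t * LL t))"
    by (intro sm_mult sm_const sm_chi sm_LL)
  then show ?thesis by (simp add: Phi_def[abs_def])
qed

definition S2 :: "real set" where "S2 = {t. t < 1/5} \<union> {t. 4/5 < t}"

lemma open_S2: "open S2" unfolding S2_def by (intro open_Un open_Collect_less continuous_intros)

lemma Phi_S2: "t \<in> S2 \<Longrightarrow> Phi t = 0"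
  by (auto simp: S2_def Phi_def chi_zero)

lemma smooth_union: "smooth_on A f \<Longrightarrow> smooth_on B f \<Longrightarrow> smooth_on (A \<union> B) f"
  by (auto simp: smooth_on_def)

lemma S_cover: "{0<..<1} \<union> S2 = UNIV"
  by (auto simp: S2_def)

lemma smooth_Phi: "smooth_on UNIV Phi"
proof -
  have "smooth_on {0<..<1} Phi" by (rule sm_smooth_on[OF _ sm_Phi01]) simp
  moreover have "smooth_on S2 Phi"
    by (rule sm_smooth_on[OF open_S2 sm_eq_on[OF open_S2 sm_const[of S2 0]]]) (simp add: Phi_S2)
  ultimately show ?thesis using smooth_union S_cover by metis
qed

lemma sm_poly: "sm S (poly p)"
proof (rule sm_coinduct[where C = "range poly"])
  fix h assume "h \<in> range (poly :: real poly \<Rightarrow> _)"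
  then obtain q where "h = poly q" by blast
  then show "\<exists>h'. (h' \<in> range poly \<or> sm S h') \<and> (\<forall>t\<in>S. (h has_real_derivative h' t) (at t))"
    by (intro exI[of _ "poly (pderiv q)"]) (auto intro: poly_DERIV)
qed simp

lemma sm_cubic: "open S \<Longrightarrow> sm S (\<lambda>t. C * t^3 / 6)"
  by (rule sm_eq_on[OF _ sm_poly[of S "[:0, 0, 0, C/6:]"]]) (auto simp: power3_eq_cube algebra_simps)

lemma higher_deriv_zero: "(deriv ^^ n) (\<lambda>_. 0::real) = (\<lambda>_. 0)"
  by (induction n) auto

lemma derivs_on_open:
  assumes S: "open S" and eq: "\<And>s. s \<in> S \<Longrightarrow> g s = h s"
    and d: "\<And>s. s \<in> S \<Longrightarrow> (h has_real_derivative h' s) (at s)"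
  shows "\<And>s. s \<in> S \<Longrightarrow> deriv g s = h' s"
proof -
  fix s assume s: "s \<in> S"
  have "eventually (\<lambda>x. g x = h x) (nhds s)"
    using S s eq by (intro eventually_nhds_in_open[THEN eventually_mono]) auto
  then have "deriv g s = deriv h s" by (rule deriv_cong_ev) simp
  also have "\<dots> = h' s" using d[OF s] by (rule DERIV_imp_deriv)
  finally show "deriv g s = h' s" .
qed

lemma partC_core: "\<exists>f. coh1_metric f \<and> uncountable {x. minimal_fibre f x}"
proof -
  have diffP: "((deriv ^^ n) Phi) differentiable (at t)" for n t
    using smooth_Phi by (auto simp: smooth_on_def)
  define P1 where "P1 = deriv Phi"
  define P2 where "P2 = deriv P1"
  define P3 where "P3 = deriv P2"
  have d0: "(Phi has_real_derivative P1 t) (at t)" for t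
    using diffP[of 0 t] by (simp add: P1_def DERIV_deriv_iff_real_differentiable)
  have d1: "(P1 has_real_derivative P2 t) (at t)" for t
    using diffP[of 1 t] by (simp add: P1_def P2_def DERIV_deriv_iff_real_differentiable)
  have d2: "(P2 has_real_derivative P3 t) (at t)" for t
    using diffP[of 2 t] by (simp add: P1_def P2_def P3_def DERIV_deriv_iff_real_differentiable numeral_2_eq_2)
  have "continuous_on {1/5..4/5} P2"
    using d2 by (intro continuous_at_imp_continuous_on) (auto intro: DERIV_isCont)
  then have "bounded (P2 ` {1/5..4/5})" by (intro compact_imp_bounded compact_continuous_image) auto
  then obtain B where B: "\<And>t. t \<in> {1/5..4/5} \<Longrightarrow> \<bar>P2 t\<bar> \<le> B" unfolding bounded_iff by fastforce
  define C where "C = 25 * (\<bar>B\<bar> + 1)"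
  have C0: "C \<ge> 0" by (simp add: C_def)
  define f where "f t = C * t^3 / 6 + Phi t" for t
  have df1: "deriv f = (\<lambda>t. C * t^2 / 2 + P1 t)"
  proof
    fix t
    have "(f has_real_derivative C * t^2 / 2 + P1 t) (at t)"
      unfolding f_def[abs_def] by (auto intro!: derivative_eq_intros d0 simp: power2_eq_square)
    then show "deriv f t = C * t^2 / 2 + P1 t" by (rule DERIV_imp_deriv)
  qed
  have df2: "deriv (deriv f) = (\<lambda>t. C * t + P2 t)"
  proof
    fix t
    have "((\<lambda>t. C * t^2 / 2 + P1 t) has_real_derivative C * t + P2 t) (at t)"
      by (auto intro!: derivative_eq_intros d1 simp: power2_eq_square)
    then show "deriv (deriv f) t = C * t + P2 t" unfolding df1 by (rule DERIV_imp_deriv)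
  qed
  have df3: "deriv (deriv (deriv f)) = (\<lambda>t. C + P3 t)"
  proof
    fix t
    have "((\<lambda>t. C * t + P2 t) has_real_derivative C + P3 t) (at t)"
      by (auto intro!: derivative_eq_intros d2)
    then show "deriv (deriv (deriv f)) t = C + P3 t" unfolding df2 by (rule DERIV_imp_deriv)
  qed
  have sm1: "sm {0<..<1} f"
    unfolding f_def[abs_def] by (intro sm_add sm_cubic sm_Phi01) simp
  have sm2: "sm S2 f"
    by (rule sm_eq_on[OF open_S2 sm_cubic[OF open_S2, of C]]) (simp add: f_def Phi_S2)
  have smooth: "smooth_on UNIV f"
    using smooth_union[OF sm_smooth_on[OF _ sm1] sm_smooth_on[OF open_S2 sm2]] S_cover by simp
  have D: "D3 f" by (rule smooth_D3[OF _ _ smooth]) auto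
  have FFpos: "FF f t > 0" if t: "0 < t" "t < 1" for t
  proof -
    have FFeq: "FF f t = 1 + t / (1 - t) + C * t^2 + t * P2 t"
      by (simp add: FF_def gg_def df2 algebra_simps power2_eq_square)
    have a: "t / (1 - t) \<ge> 0" using t by simp
    show ?thesis
    proof (cases "t \<in> {1/5..4/5}")
      case True
      have "t^2 \<ge> (1/5)^2" using True by (intro power_mono) auto
      then have "C * t^2 \<ge> C * (1/5)^2" using C0 by (rule mult_left_mono)
      moreover have "C * (1/5)^2 = \<bar>B\<bar> + 1" by (simp add: C_def power2_eq_square)
      ultimately have c: "C * t^2 \<ge> \<bar>B\<bar> + 1" by linarith
      have "\<bar>t * P2 t\<bar> \<le> 1 * \<bar>B\<bar>"
        unfolding abs_mult using B[OF True] t by (intro mult_mono) auto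
      then have "t * P2 t \<ge> - \<bar>B\<bar>" by simp
      with a c FFeq show ?thesis by linarith
    next
      case False
      then have tS2: "t \<in> S2" by (auto simp: S2_def)
      have "eventually (\<lambda>x. Phi x = (\<lambda>_. 0) x) (nhds t)"
        using open_S2 tS2 by (intro eventually_nhds_in_open[THEN eventually_mono]) (auto simp: Phi_S2)
      then have "(deriv ^^ 2) Phi t = (deriv ^^ 2) (\<lambda>_. 0::real) t" by (rule higher_deriv_cong_ev) simp
      then have "P2 t = 0" by (simp add: P1_def P2_def higher_deriv_zero numeral_2_eq_2)
      have "C * t^2 \<ge> 0" using C0 by simp
      moreover have "FF f t = 1 + t / (1 - t) + C * t^2" using FFeq \<open>P2 t = 0\<close> by simp
      ultimately show ?thesis using a by linarith
    qed
  qed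
  have coh: "coh1_metric f"
    unfolding coh1_metric_def
  proof (intro conjI ballI)
    show "\<exists>U. open U \<and> {0..1} \<subseteq> U \<and> smooth_on U f" using smooth by blast
    fix x assume x: "x \<in> intP"
    then show "hess_posdef (sympot f) x"
      using posdef_iff[OF D x] FFpos[of "fst x + snd x"] by (auto simp: intP_iff)
  qed
  define I where "I = {2/5<..<3/5::real}"
  have openI: "open I" by (simp add: I_def)
  have PhiI: "Phi s = - LL s" if "s \<in> I" for s using that by (simp add: I_def Phi_def chi_one)
  define L1 where "L1 s = - (ln s - ln (1 - s))" for s :: real
  define L2 where "L2 s = - (1 / s + 1 / (1 - s))" for s :: real
  define L3 where "L3 s = 1 / s^2 - 1 / (1 - s)^2" for s :: real
  have I01: "0 < s \<and> s < 1" if "s \<in> I" for s using that by (auto simp: I_def)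
  have dL0: "((\<lambda>s. - LL s) has_real_derivative L1 s) (at s)" if "s \<in> I" for s
    using I01[OF that] unfolding LL_def[abs_def] L1_def by (auto intro!: derivative_eq_intros)
  have dL1: "(L1 has_real_derivative L2 s) (at s)" if "s \<in> I" for s
    using I01[OF that] unfolding L1_def[abs_def] L2_def by (auto intro!: derivative_eq_intros simp: field_simps)
  have dL2: "(L2 has_real_derivative L3 s) (at s)" if "s \<in> I" for s
    using I01[OF that] unfolding L2_def[abs_def] L3_def by (auto intro!: derivative_eq_intros simp: field_simps power2_eq_square)
  have eP1: "P1 s = L1 s" if "s \<in> I" for s
    unfolding P1_def by (rule derivs_on_open[OF openI PhiI dL0 that])
  have eP2: "P2 s = L2 s" if "s \<in> I" for s
    unfolding P2_def by (rule derivs_on_open[OF openI eP1 dL1 that])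
  have eP3: "P3 s = L3 s" if "s \<in> I" for s
    unfolding P3_def by (rule derivs_on_open[OF openI eP2 dL2 that])
  have Qz: "Qf f t = 0" if "t \<in> I" for t
  proof -
    have t: "0 < t" "t < 1" using I01[OF that] by auto
    have "Qf f t = 3 * t - 2 + t * (1 - t)^2 * (t * (C + L3 t) - (C * t + L2 t))"
      unfolding Qf_def df3 unfolding df2 using eP2[OF that] eP3[OF that] by simp
    also have "\<dots> = 0"
    proof -
      define u where "u = 1 / (1 - t)"
      define v where "v = 1 / t"
      have hu: "u * (1 - t) = 1" using t by (simp add: u_def)
      have hv: "v * t = 1" using t by (simp add: v_def)
      have "L2 t = - (v + u)" by (simp add: L2_def u_def v_def)
      moreover have "L3 t = v^2 - u^2" by (simp add: L3_def u_def v_def power_one_over)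
      ultimately show ?thesis using hu hv by algebra
    qed
    finally show ?thesis .
  qed
  have sub: "(\<lambda>t. (t/2, t/2)) ` I \<subseteq> {x. minimal_fibre f x}"
    unfolding minimal_set[OF coh] using Qz I01 by auto
  have "uncountable I" unfolding I_def by (simp add: uncountable_open_interval)
  moreover have "inj_on (\<lambda>t. (t/2, t/2)) I" by (auto simp: inj_on_def)
  ultimately have "uncountable ((\<lambda>t. (t/2, t/2)) ` I)" using countable_image_inj_on by blast
  then have "uncountable {x. minimal_fibre f x}" using sub countable_subset by blast
  with coh show ?thesis by blast
qed


lemma pderiv_sum_poly: "pderiv (\<Sum>i\<in>A. g i) = (\<Sum>i\<in>A. pderiv (g i))"
  by (induction A rule: infinite_finite_induct) (auto simp: pderiv_add)

lemma antideriv_ex: "\<exists>Q. pderiv Q = (q :: real poly)"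
proof -
  let ?Q = "\<Sum>i\<le>degree q. monom (coeff q i / real (Suc i)) (Suc i)"
  have "pderiv ?Q = (\<Sum>i\<le>degree q. monom (coeff q i) i)"
    unfolding pderiv_sum_poly by (intro sum.cong refl) (simp add: pderiv_monom)
  also have "\<dots> = q" by (rule poly_as_sum_of_monoms)
  finally show ?thesis by blast
qed

lemma deriv_poly: "deriv (poly p) = poly (pderiv p)"
  by (rule ext) (rule DERIV_imp_deriv[OF poly_DERIV])

lemma higher_deriv_poly: "(deriv ^^ n) (poly p) = poly ((pderiv ^^ n) p)"
  by (induction n) (auto simp: deriv_poly)

lemma smooth_poly: "smooth_on U (poly p)"
  unfolding smooth_on_def higher_deriv_poly
  using poly_DERIV real_differentiable_def by blast

lemma pos_glue:
  fixes g :: "real \<Rightarrow> real"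
  assumes cont: "\<And>x. isCont g x" and g0: "g 0 > 0" and g1: "g 1 > 0"
  shows "\<exists>L\<ge>0. \<forall>t\<in>{0..1}. g t + L * (t^3 * (1 - t)^2) > 0"
proof -
  obtain d0 where d0: "d0 > 0" "\<And>t. dist t 0 < d0 \<Longrightarrow> dist (g t) (g 0) < g 0"
    using cont[of 0] g0 unfolding continuous_at_eps_delta by blast
  obtain d1 where d1: "d1 > 0" "\<And>t. dist t 1 < d1 \<Longrightarrow> dist (g t) (g 1) < g 1"
    using cont[of 1] g1 unfolding continuous_at_eps_delta by blast
  have "continuous_on {0..1} g" by (simp add: cont continuous_at_imp_continuous_on)
  then have "bounded (g ` {0..1})" by (intro compact_imp_bounded compact_continuous_image) auto
  then obtain B where B: "\<And>t. t \<in> {0..1} \<Longrightarrow> \<bar>g t\<bar> \<le> B" unfolding bounded_iff by fastforce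
  define e where "e = min (min d0 d1) 1 / 2"
  have e: "e > 0" "e < d0" "e < d1" "e \<le> 1/2" using d0 d1 by (auto simp: e_def)
  define L where "L = (\<bar>B\<bar> + 1) / e^5"
  have L0: "L \<ge> 0" using e by (simp add: L_def)
  have "g t + L * (t^3 * (1 - t)^2) > 0" if t: "t \<in> {0..1}" for t
  proof (cases "t < e \<or> t > 1 - e")
    case True
    then have "g t > 0"
    proof
      assume "t < e" then have "dist t 0 < d0" using t e by (auto simp: dist_real_def)
      from d0(2)[OF this] show ?thesis by (auto simp: dist_real_def)
    next
      assume "t > 1 - e" then have "dist t 1 < d1" using t e by (auto simp: dist_real_def)
      from d1(2)[OF this] show ?thesis by (auto simp: dist_real_def)
    qed
    moreover have "L * (t^3 * (1 - t)^2) \<ge> 0" using L0 t by auto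
    ultimately show ?thesis by linarith
  next
    case False
    then have te: "e \<le> t" "e \<le> 1 - t" by auto
    have "e^3 \<le> t^3" using te e by (intro power_mono) auto
    moreover have "e^2 \<le> (1 - t)^2" using te e by (intro power_mono) auto
    ultimately have "e^3 * e^2 \<le> t^3 * (1 - t)^2" using e t by (intro mult_mono) auto
    then have "e^5 \<le> t^3 * (1 - t)^2" by (simp add: power_add[symmetric])
    then have "L * e^5 \<le> L * (t^3 * (1 - t)^2)" using L0 by (rule mult_left_mono)
    moreover have "L * e^5 = \<bar>B\<bar> + 1" using e by (simp add: L_def)
    moreover have "g t \<ge> - \<bar>B\<bar>" using B[OF t] by auto
    ultimately show ?thesis by linarith
  qed
  with L0 show ?thesis by blast
qed

lemma bezout_lin_pow:
  fixes p :: "real poly"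
  assumes pa: "poly p a \<noteq> 0"
  shows "\<exists>u v. u * p + v * [:-a, 1:]^Suc k = 1"
proof (induction k)
  case 0
  have "poly (p - [:poly p a:]) a = 0" by simp
  then obtain r where r: "p - [:poly p a:] = [:-a, 1:] * r" unfolding poly_eq_0_iff_dvd by (auto elim: dvdE)
  have "[:1 / poly p a:] * p + (- [:1 / poly p a:] * r) * [:-a, 1:]^Suc 0 = smult (1 / poly p a) (p - [:-a, 1:] * r)"
    by (simp add: algebra_simps smult_diff_right smult_add_right)
  also have "p - [:-a, 1:] * r = [:poly p a:]" using r by (simp add: algebra_simps)
  also have "smult (1 / poly p a) [:poly p a:] = 1" using pa by (simp add: one_pCons)
  finally show ?case by blast
next
  case (Suc k)
  then obtain u v where uv: "u * p + v * [:-a, 1:]^Suc k = 1" by blast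
  have "poly (v - [:poly v a:]) a = 0" by simp
  then obtain q where q: "v - [:poly v a:] = [:-a, 1:] * q" unfolding poly_eq_0_iff_dvd by (auto elim: dvdE)
  define c where "c = poly v a"
  define L where "L = [:-a, 1:]"
  have v: "v = [:c:] + L * q" using q by (simp add: c_def L_def algebra_simps)
  have uv': "u * p + v * L^Suc k = 1" using uv by (simp add: L_def)
  have "(u + [:c:] * L^Suc k * u) * p + (q + [:c:] * v * L^k) * L^Suc (Suc k) = 1"
  proof -
    have "(u + [:c:] * L^Suc k * u) * p + (q + [:c:] * v * L^k) * L^Suc (Suc k)
        = (u * p + ([:c:] + L * q) * L^Suc k) + [:c:] * L^Suc k * (u * p + v * L^Suc k - 1)"
      by (simp add: algebra_simps)
    also have "\<dots> = 1" using uv' v by simp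
    finally show ?thesis .
  qed
  then show ?case unfolding L_def by blast
qed

lemma coh1_poly:
  assumes "\<And>t. 0 < t \<Longrightarrow> t < 1 \<Longrightarrow> poly (pderiv (pderiv F)) t \<ge> 0"
  shows "coh1_metric (poly F)"
  unfolding coh1_metric_def
proof (intro conjI ballI)
  show "\<exists>U. open U \<and> {0..1} \<subseteq> U \<and> smooth_on U (poly F)"
    by (intro exI[of _ UNIV]) (auto simp: smooth_poly)
  have D: "D3 (poly F)" by (rule smooth_D3[of UNIV]) (auto simp: smooth_poly)
  fix x assume x: "x \<in> intP"
  let ?t = "fst x + snd x"
  have t: "0 < ?t" "?t < 1" using x by (auto simp: intP_iff)
  have "FF (poly F) ?t = 1 + ?t * (1 / (1 - ?t) + poly (pderiv (pderiv F)) ?t)"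
    by (simp add: FF_def gg_def deriv_poly)
  moreover have "?t * (1 / (1 - ?t) + poly (pderiv (pderiv F)) ?t) \<ge> 0"
    using t assms[OF t] by auto
  ultimately have "FF (poly F) ?t > 0" by linarith
  then show "hess_posdef (sympot (poly F)) x" using posdef_iff[OF D x] by simp
qed

lemma partD_poly:
  fixes T :: "real set"
  assumes fin: "finite T" and ne: "T \<noteq> {}" and sub: "T \<subseteq> {0<..<1}"
  shows "\<exists>f. coh1_metric f \<and> {t. 0 < t \<and> t < 1 \<and> Qf f t = 0} = T"
proof -
  obtain s1 where s1: "s1 \<in> T" using ne by auto
  define R where "R = (\<Prod>s\<in>T. [:-s, 1:]^2)"
  define P0 where "P0 = [:-s1, 1:] * R"
  define W :: "real poly" where "W = [:0, 1:]^3 * [:-1, 1:]^2"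
  have polyR: "poly R t = (\<Prod>s\<in>T. (t - s)^2)" for t by (simp add: R_def poly_prod)
  have polyW: "poly W t = t^3 * (1 - t)^2" for t by (simp add: W_def power2_eq_square algebra_simps)
  have R0: "poly R 0 > 0" unfolding polyR using sub by (intro prod_pos) auto
  have R1: "poly R 1 > 0" unfolding polyR using sub by (intro prod_pos) auto
  have P00: "poly P0 0 < 0" using R0 s1 sub by (auto simp: P0_def mult_neg_pos)
  have P01: "poly P0 1 > 0" using R1 s1 sub by (auto simp: P0_def)
  have P0zero: "poly P0 t = 0 \<longleftrightarrow> t \<in> T" for t
    using s1 fin by (auto simp: P0_def polyR)
  obtain u1 v1 where uv1: "u1 * P0 + v1 * [:-0, 1:]^Suc 2 = 1"
    using bezout_lin_pow[of P0 0 2] P00 by auto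
  obtain u2 v2 where uv2: "u2 * P0 + v2 * [:-1, 1:]^Suc 1 = 1"
    using bezout_lin_pow[of P0 1 1] P01 by auto
  define U where "U = u1 * u2 * P0 + u1 * v2 * [:-1, 1:]^2 + u2 * v1 * [:0, 1:]^3"
  define V where "V = v1 * v2"
  have UV: "U * P0 + V * W = 1"
  proof -
    have "U * P0 + V * W = (u1 * P0 + v1 * [:-0, 1:]^Suc 2) * (u2 * P0 + v2 * [:-1, 1:]^Suc 1)"
      by (simp add: U_def V_def W_def algebra_simps numeral_3_eq_3 numeral_2_eq_2)
    also have "\<dots> = 1" using uv1 uv2 by simp
    finally show ?thesis .
  qed
  have UVt: "poly U t * poly P0 t + poly V t * poly W t = 1" for t
    using arg_cong[OF UV, of "\<lambda>p. poly p t"] by simp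
  have e0: "poly U 0 * poly P0 0 = 1" using UVt[of 0] polyW[of 0] by simp
  have U0: "poly U 0 < 0"
  proof (rule ccontr)
    assume "\<not> poly U 0 < 0"
    then have "poly U 0 * poly P0 0 \<le> 0" using P00 by (intro mult_nonneg_nonpos) auto
    with e0 show False by simp
  qed
  have e1: "poly U 1 * poly P0 1 = 1" using UVt[of 1] polyW[of 1] by simp
  have U1: "poly U 1 > 0"
  proof (rule ccontr)
    assume "\<not> poly U 1 > 0"
    then have "poly U 1 * poly P0 1 \<le> 0" using P01 by (intro mult_nonpos_nonneg) auto
    with e1 show False by simp
  qed
  obtain L where L: "L \<ge> 0" "\<And>t. t \<in> {0..1} \<Longrightarrow> (3 * t - 2) * poly U t + L * (t^3 * (1 - t)^2) > 0"
    using pos_glue[of "\<lambda>t. (3 * t - 2) * poly U t"] U0 U1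
    by (auto intro!: continuous_intros)
  define nP where "nP = smult L P0 - [:-2, 3:] * V"
  obtain M1 where M1: "pderiv M1 = nP" using antideriv_ex by blast
  have "continuous_on {0..1} (poly M1)" by (auto intro!: continuous_intros)
  then have "bounded (poly M1 ` {0..1})" by (intro compact_imp_bounded compact_continuous_image) auto
  then obtain A1 where A1: "\<And>t. t \<in> {0..1} \<Longrightarrow> \<bar>poly M1 t\<bar> \<le> A1" unfolding bounded_iff by fastforce
  define F2 where "F2 = [:0, A1:] + [:0, 1:] * M1"
  obtain F1 where F1: "pderiv F1 = F2" using antideriv_ex by blast
  obtain F where F: "pderiv F = F1" using antideriv_ex by blast
  have polyF2: "poly F2 t = t * (A1 + poly M1 t)" for t by (simp add: F2_def algebra_simps)
  have polyF3: "poly (pderiv F2) t = A1 + poly M1 t + t * poly nP t" for t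
    by (simp add: F2_def pderiv_add pderiv_mult pderiv_pCons M1 algebra_simps)
  have coh: "coh1_metric (poly F)"
  proof (rule coh1_poly)
    fix t :: real assume t: "0 < t" "t < 1"
    have "A1 + poly M1 t \<ge> 0" using A1[of t] t by auto
    then show "poly (pderiv (pderiv F)) t \<ge> 0" using t by (simp add: F F1 polyF2)
  qed
  have Qf_eq: "Qf (poly F) t = poly P0 t * ((3 * t - 2) * poly U t + L * (t^3 * (1 - t)^2))" for t
  proof -
    have "Qf (poly F) t = 3 * t - 2 + t * (1 - t)^2 * (t * poly (pderiv F2) t - poly F2 t)"
      by (simp add: Qf_def deriv_poly F F1)
    also have "\<dots> = 3 * t - 2 + t^3 * (1 - t)^2 * (L * poly P0 t - (3 * t - 2) * poly V t)"
      by (simp add: polyF2 polyF3 nP_def algebra_simps power2_eq_square power3_eq_cube)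
    also have "\<dots> = poly P0 t * ((3 * t - 2) * poly U t + L * (t^3 * (1 - t)^2))"
      using UVt[of t] unfolding polyW by algebra
    finally show ?thesis .
  qed
  have "{t. 0 < t \<and> t < 1 \<and> Qf (poly F) t = 0} = T"
  proof (intro equalityI subsetI)
    fix t assume "t \<in> {t. 0 < t \<and> t < 1 \<and> Qf (poly F) t = 0}"
    then have t: "0 < t" "t < 1" "Qf (poly F) t = 0" by auto
    have "(3 * t - 2) * poly U t + L * (t^3 * (1 - t)^2) > 0" using L(2)[of t] t by auto
    then have "poly P0 t = 0" using t(3) Qf_eq[of t] by simp
    then show "t \<in> T" using P0zero by simp
  next
    fix t assume "t \<in> T"
    then show "t \<in> {t. 0 < t \<and> t < 1 \<and> Qf (poly F) t = 0}"
      using sub P0zero[of t] Qf_eq[of t] by auto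
  qed
  with coh show ?thesis by blast
qed


theorem mainTheorem7:
  shows "(\<forall>f x. coh1_metric f \<and> minimal_fibre f x \<longrightarrow> fst x = snd x)
       \<and> (\<forall>f. coh1_metric f \<and> analytic_metric f \<longrightarrow> finite {x. minimal_fibre f x})
       \<and> (\<exists>f. coh1_metric f \<and> \<not> analytic_metric f \<and> uncountable {x. minimal_fibre f x})
       \<and> (\<forall>S. finite S \<and> S \<noteq> {} \<and> S \<subseteq> intP \<inter> {x. fst x = snd x} \<longrightarrow>
            (\<exists>f. coh1_metric f \<and> {x. minimal_fibre f x} = S))"
proof (intro conjI allI impI)
  fix f x assume "coh1_metric f \<and> minimal_fibre f x"
  then show "fst x = snd x" using partA by blast
next
  fix f assume "coh1_metric f \<and> analytic_metric f"
  then show "finite {x. minimal_fibre f x}" using partB by blast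
next
  obtain f where f: "coh1_metric f" "uncountable {x. minimal_fibre f x}" using partC_core by blast
  have "\<not> analytic_metric f"
  proof
    assume "analytic_metric f"
    then have "finite {x. minimal_fibre f x}" using partB f(1) by blast
    then show False using f(2) countable_finite by blast
  qed
  with f show "\<exists>f. coh1_metric f \<and> \<not> analytic_metric f \<and> uncountable {x. minimal_fibre f x}" by blast
next
  fix S :: "(real \<times> real) set"
  assume S: "finite S \<and> S \<noteq> {} \<and> S \<subseteq> intP \<inter> {x. fst x = snd x}"
  define T where "T = (\<lambda>x. fst x + snd x) ` S"
  have T: "finite T" "T \<noteq> {}" "T \<subseteq> {0<..<1}"
    using S by (auto simp: T_def intP_iff)
  obtain f where f: "coh1_metric f" "{t. 0 < t \<and> t < 1 \<and> Qf f t = 0} = T"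
    using partD_poly[OF T] by blast
  have "{x. minimal_fibre f x} = (\<lambda>t. (t/2, t/2)) ` T"
    using minimal_set[OF f(1)] f(2) by simp
  also have "\<dots> = (\<lambda>x. ((fst x + snd x)/2, (fst x + snd x)/2)) ` S"
    by (simp add: T_def image_image)
  also have "\<dots> = id ` S"
    using S by (intro image_cong) (auto simp: prod_eq_iff)
  also have "\<dots> = S" by simp
  finally show "\<exists>f. coh1_metric f \<and> {x. minimal_fibre f x} = S" using f(1) by blast
qed

end
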